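(* Let $\boldsymbol\lambda,\boldsymbol\mu\in\Pi^l_m$ and $\lambda,\mu\in\Pi$ with $\boldsymbol\lambda\leftrightarrow\lambda$, $\boldsymbol\mu\leftrightarrow\mu$. If $j_{\boldsymbol\lambda,\boldsymbol\mu}\neq0$ (so that (J1) or (J2) holds, with ribbons $\rho,\rho'$), then $N_i(\rho)=N_i(\rho')$ for all $i\in\mathbb Z$, and $|\lambda|=|\mu|$.
   Context: Fix $n,l,m\ge1$, $\mathbf s_l=(s_1,\dots,s_l)\in\mathbb Z^l$, $s=\sum s_b$. Partitions are identified with Young diagrams; $\Pi^l_m$ = $l$-tuples of partitions of total size $m$, nodes $(i,j,b)$ with content $s_b+j-i$ and $\mathrm{res}_n$ = content mod $n$. For a set of nodes $\theta$, $N_i(\theta)=\#\{\gamma\in\theta:\mathrm{res}_n(\gamma)=i\bmod n\}$. Ribbon: nonempty connected skew diagram with no $2\times2$ square; head = node with $j-i$ minimal; $\mathrm{ht}$ = row of head minus row of tail; length = number of nodes. Each $k\in\mathbb Z$ is uniquely $k=c(k)+n(d(k)-1)+nl\,m(k)$, $c(k)\in\{1..n\}$, $d(k)\in\{1..l\}$; $\phi(k)=c(k)+n\,m(k)$. $\boldsymbol\lambda\leftrightarrow\lambda$ iff $\{(\lambda^{(b)}_i+s_b+1-i,b):i\ge1,1\le b\le l\}=\{(\phi(k),d(k)):k\in\{\lambda_i+s+1-i:i\ge1\}\}$. (J1): $\boldsymbol\lambda\ne\boldsymbol\mu$, there are $d\ne d'$ with $\mu^{(d)}\subset\lambda^{(d)}$,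 $\lambda^{(d')}\subset\mu^{(d')}$, $\lambda^{(b)}=\mu^{(b)}$ otherwise, and $\rho:=\lambda^{(d)}/\mu^{(d)}$ (component $d$), $\rho':=\mu^{(d')}/\lambda^{(d')}$ (component $d'$) ribbons of common length $\hat h$. (J2): $\boldsymbol\lambda\ne\boldsymbol\mu$, there is $d$ with $\lambda^{(b)}=\mu^{(b)}$ for $b\ne d$, $\rho:=\lambda^{(d)}/(\lambda^{(d)}\cap\mu^{(d)})$, $\rho':=\mu^{(d)}/(\lambda^{(d)}\cap\mu^{(d)})$ ribbons of common length $\hat h$. $j_{\boldsymbol\lambda,\boldsymbol\mu}\in\mathbb Z$: in case (J1), $(-1)^{\mathrm{ht}\rho+\mathrm{ht}\rho'}$ if $\mathrm{res}_n(\mathrm{hd}\rho)=\mathrm{res}_n(\mathrm{hd}\rho')$, else $0$; in case (J2), $(-1)^{\mathrm{ht}\rho+\mathrm{ht}\rho'}\varepsilon$ with $\varepsilon=1$ if head residues are equal and $\hat h\not\equiv0\pmod n$, $\varepsilon=-1$ if they differ and $\hat h\equiv0\pmod n$, $\varepsilon=0$ otherwise; in all other cases $0$. *)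

theory Defs
  imports Main
begin

text \<open>Cells of a Young diagram are pairs (i,j) (row i, column j), both starting at 1.
  A partition is identified with its Young diagram.\<close>

type_synonym cell = "nat \<times> nat"

definition is_partition :: "cell set \<Rightarrow> bool" where
  "is_partition Y \<longleftrightarrow> finite Y \<and> (\<forall>(i,j)\<in>Y. 1 \<le> i \<and> 1 \<le> j) \<and>
     (\<forall>i j i' j'. (i,j) \<in> Y \<and> 1 \<le> i' \<and> i' \<le> i \<and> 1 \<le> j' \<and> j' \<le> j \<longrightarrow> (i',j') \<in> Y)"

definition part :: "cell set \<Rightarrow> nat \<Rightarrow> nat" where
  "part Y i = card {j. (i,j) \<in> Y}"

definition is_multipartition :: "nat \<Rightarrow> (nat \<Rightarrow> cell set) \<Rightarrow> bool" where
  "is_multipartition l lam \<longleftrightarrow> (\<forall>b\<in>{1..l}. is_partition (lam b)) \<and> (\<forall>b. b \<notin> {1..l} \<longrightarrow> lam b = {})"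

definition Pi_lm :: "nat \<Rightarrow> nat \<Rightarrow> (nat \<Rightarrow> cell set) set" where
  "Pi_lm l m = {lam. is_multipartition l lam \<and> (\<Sum>b=1..l. card (lam b)) = m}"

definition content :: "(nat \<Rightarrow> int) \<Rightarrow> nat \<times> nat \<times> nat \<Rightarrow> int" where
  "content s \<gamma> = (case \<gamma> of (i,j,b) \<Rightarrow> s b + int j - int i)"

definition res :: "nat \<Rightarrow> int \<Rightarrow> int" where
  "res n x = x mod int n"

definition comp_nodes :: "nat \<Rightarrow> cell set \<Rightarrow> (nat \<times> nat \<times> nat) set" where
  "comp_nodes d R = (\<lambda>(i,j). (i,j,d)) ` R"

definition Ncount :: "nat \<Rightarrow> (nat \<Rightarrow> int) \<Rightarrow> int \<Rightarrow> (nat \<times> nat \<times> nat) set \<Rightarrow> nat" where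
  "Ncount n s i \<theta> = card {\<gamma>\<in>\<theta>. res n (content s \<gamma>) = i mod int n}"

definition adj_in :: "cell set \<Rightarrow> (cell \<times> cell) set" where
  "adj_in R = {(x,y). x \<in> R \<and> y \<in> R \<and>
     \<bar>int (fst x) - int (fst y)\<bar> + \<bar>int (snd x) - int (snd y)\<bar> = 1}"

definition is_skew :: "cell set \<Rightarrow> bool" where
  "is_skew R \<longleftrightarrow> (\<exists>Y Z. is_partition Y \<and> is_partition Z \<and> Z \<subseteq> Y \<and> R = Y - Z)"

definition is_ribbon :: "cell set \<Rightarrow> bool" where
  "is_ribbon R \<longleftrightarrow> R \<noteq> {} \<and> is_skew R \<and> (\<forall>x\<in>R. \<forall>y\<in>R. (x,y) \<in> (adj_in R)\<^sup>*) \<and>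
     \<not> (\<exists>i j. (i,j) \<in> R \<and> (i+1,j) \<in> R \<and> (i,j+1) \<in> R \<and> (i+1,j+1) \<in> R)"

definition rhead :: "cell set \<Rightarrow> cell" where
  "rhead R = (THE c. c \<in> R \<and> (\<forall>c'\<in>R. int (snd c) - int (fst c) \<le> int (snd c') - int (fst c')))"

definition rtail :: "cell set \<Rightarrow> cell" where
  "rtail R = (THE c. c \<in> R \<and> (\<forall>c'\<in>R. int (snd c') - int (fst c') \<le> int (snd c) - int (fst c)))"

text \<open>Height: row of head minus row of tail (nonnegative for ribbons).\<close>
definition ht :: "cell set \<Rightarrow> nat" where
  "ht R = fst (rhead R) - fst (rtail R)"

definition decomp :: "nat \<Rightarrow> nat \<Rightarrow> int \<Rightarrow> int \<times> int \<times> int" where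
  "decomp n l k = (THE (c,d,m). 1 \<le> c \<and> c \<le> int n \<and> 1 \<le> d \<and> d \<le> int l \<and>
      k = c + int n * (d - 1) + int n * int l * m)"

definition cfun :: "nat \<Rightarrow> nat \<Rightarrow> int \<Rightarrow> int" where
  "cfun n l k = fst (decomp n l k)"
definition dfun :: "nat \<Rightarrow> nat \<Rightarrow> int \<Rightarrow> nat" where
  "dfun n l k = nat (fst (snd (decomp n l k)))"
definition mfun :: "nat \<Rightarrow> nat \<Rightarrow> int \<Rightarrow> int" where
  "mfun n l k = snd (snd (decomp n l k))"
definition phi :: "nat \<Rightarrow> nat \<Rightarrow> int \<Rightarrow> int" where
  "phi n l k = cfun n l k + int n * mfun n l k"

definition corresp :: "nat \<Rightarrow> nat \<Rightarrow> (nat \<Rightarrow> int) \<Rightarrow> (nat \<Rightarrow> cell set) \<Rightarrow> cell set \<Rightarrow> bool" where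
  "corresp n l s blam lam \<longleftrightarrow>
     {(int (part (blam b) i) + s b + 1 - int i, b) | i b. 1 \<le> i \<and> 1 \<le> b \<and> b \<le> l}
   = {(phi n l k, dfun n l k) | k. \<exists>i\<ge>1. k = int (part lam i) + (\<Sum>b=1..l. s b) + 1 - int i}"

definition J1 :: "nat \<Rightarrow> (nat \<Rightarrow> cell set) \<Rightarrow> (nat \<Rightarrow> cell set) \<Rightarrow> nat \<Rightarrow> nat \<Rightarrow> bool" where
  "J1 l lam mu d d' \<longleftrightarrow> lam \<noteq> mu \<and> d \<in> {1..l} \<and> d' \<in> {1..l} \<and> d \<noteq> d' \<and>
     mu d \<subseteq> lam d \<and> lam d' \<subseteq> mu d' \<and> (\<forall>b\<in>{1..l}. b \<noteq> d \<and> b \<noteq> d' \<longrightarrow> lam b = mu b) \<and>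
     is_ribbon (lam d - mu d) \<and> is_ribbon (mu d' - lam d') \<and>
     card (lam d - mu d) = card (mu d' - lam d')"

definition J2 :: "nat \<Rightarrow> (nat \<Rightarrow> cell set) \<Rightarrow> (nat \<Rightarrow> cell set) \<Rightarrow> nat \<Rightarrow> bool" where
  "J2 l lam mu d \<longleftrightarrow> lam \<noteq> mu \<and> d \<in> {1..l} \<and> (\<forall>b\<in>{1..l}. b \<noteq> d \<longrightarrow> lam b = mu b) \<and>
     is_ribbon (lam d - (lam d \<inter> mu d)) \<and> is_ribbon (mu d - (lam d \<inter> mu d)) \<and>
     card (lam d - (lam d \<inter> mu d)) = card (mu d - (lam d \<inter> mu d))"

definition head_res :: "nat \<Rightarrow> (nat \<Rightarrow> int) \<Rightarrow> nat \<Rightarrow> cell set \<Rightarrow> int" where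
  "head_res n s d R = res n (content s (fst (rhead R), snd (rhead R), d))"

definition jcoef :: "nat \<Rightarrow> nat \<Rightarrow> (nat \<Rightarrow> int) \<Rightarrow> (nat \<Rightarrow> cell set) \<Rightarrow> (nat \<Rightarrow> cell set) \<Rightarrow> int" where
  "jcoef n l s lam mu =
    (if \<exists>d d'. J1 l lam mu d d' then
       (let (d, d') = (SOME (d, d'). J1 l lam mu d d');
            \<rho> = lam d - mu d; \<rho>' = mu d' - lam d'
        in if head_res n s d \<rho> = head_res n s d' \<rho>' then (-1) ^ (ht \<rho> + ht \<rho>') else 0)
     else if \<exists>d. J2 l lam mu d then
       (let d = (SOME d. J2 l lam mu d);
            \<rho> = lam d - (lam d \<inter> mu d); \<rho>' = mu d - (lam d \<inter> mu d);
            h = card \<rho>;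
            \<epsilon> = (if head_res n s d \<rho> = head_res n s d \<rho>' \<and> \<not> (int n dvd int h) then 1
                 else if head_res n s d \<rho> \<noteq> head_res n s d \<rho>' \<and> int n dvd int h then -1
                 else 0)
        in (-1) ^ (ht \<rho> + ht \<rho>') * \<epsilon>)
     else 0)"

end

theory Submission
  imports Defs
begin


lemma part_closed:
  assumes "is_partition Y" "(i,j) \<in> Y" "1 \<le> i'" "i' \<le> i" "1 \<le> j'" "j' \<le> j"
  shows "(i',j') \<in> Y"
  using assms unfolding is_partition_def by blast

lemma part_pos:
  assumes "is_partition Y" "(i,j) \<in> Y"
  shows "1 \<le> i \<and> 1 \<le> j"
  using assms unfolding is_partition_def by blast

lemma part_fin: "is_partition Y \<Longrightarrow> finite Y"
  unfolding is_partition_def by blast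

lemma part_row:
  assumes "is_partition Y"
  shows "{j. (i,j) \<in> Y} = {1..part Y i}"
proof -
  let ?S = "{j. (i,j) \<in> Y}"
  have "?S \<subseteq> snd ` Y" by force
  then have fin: "finite ?S" using part_fin[OF assms] finite_subset by blast
  show ?thesis
  proof (cases "?S = {}")
    case True then show ?thesis by (simp add: part_def)
  next
    case False
    let ?M = "Max ?S"
    have M: "?M \<in> ?S" using Max_in fin False by blast
    have eq: "?S = {1..?M}"
    proof
      show "?S \<subseteq> {1..?M}" using part_pos[OF assms] fin by auto
      show "{1..?M} \<subseteq> ?S"
      proof
        fix j assume j: "j \<in> {1..?M}"
        have iM: "(i, ?M) \<in> Y" using M by simp
        have i1: "1 \<le> i" using part_pos[OF assms iM] by simp
        have "(i, j) \<in> Y" using part_closed[OF assms iM i1 order_refl[of i], of j] j by simp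
        then show "j \<in> ?S" by simp
      qed
    qed
    then have "part Y i = ?M" unfolding part_def by (metis card_atLeastAtMost diff_Suc_1)
    then show ?thesis using eq by simp
  qed
qed

lemma mem_part:
  assumes "is_partition Y"
  shows "(i,j) \<in> Y \<longleftrightarrow> 1 \<le> j \<and> j \<le> part Y i"
proof -
  have "(i,j) \<in> Y \<longleftrightarrow> j \<in> {j. (i,j) \<in> Y}" by simp
  also have "\<dots> \<longleftrightarrow> j \<in> {1..part Y i}" using part_row[OF assms] by simp
  finally show ?thesis by simp
qed

lemma part_mono:
  assumes "is_partition Y" "1 \<le> i" "i \<le> i'"
  shows "part Y i' \<le> part Y i"
proof (cases "part Y i' = 0")
  case False
  then have "(i', part Y i') \<in> Y" using mem_part[OF assms(1)] by simp
  then have "(i, part Y i') \<in> Y" using part_closed[OF assms(1)] assms False by auto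
  then show ?thesis using mem_part[OF assms(1)] by simp
qed simp

lemma row_bound:
  assumes "is_partition Y" "(i,j) \<in> Y"
  shows "i \<le> card Y"
proof -
  have "1 \<le> j" using part_pos[OF assms] by simp
  then have "(\<lambda>i'. (i',1::nat)) ` {1..i} \<subseteq> Y" using part_closed[OF assms(1) assms(2)] by auto
  then have "card ((\<lambda>i'. (i',1::nat)) ` {1..i}) \<le> card Y" using part_fin[OF assms(1)] card_mono by blast
  moreover have "card ((\<lambda>i'. (i',1::nat)) ` {1..i}) = i" by (subst card_image) (auto simp: inj_on_def)
  ultimately show ?thesis by simp
qed

lemma part_zero:
  assumes "is_partition Y" "card Y < i"
  shows "part Y i = 0"
proof (rule ccontr)
  assume "part Y i \<noteq> 0"
  then have "(i,1) \<in> Y" using mem_part[OF assms(1)] by simp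
  then show False using row_bound[OF assms(1)] assms(2) by fastforce
qed

lemma cells_sigma:
  assumes "is_partition Y" "card Y \<le> N"
  shows "Y = Sigma {1..N} (\<lambda>i. {1..part Y i})"
proof (rule set_eqI)
  fix x :: cell
  obtain i j where x: "x = (i,j)" by (cases x)
  show "x \<in> Y \<longleftrightarrow> x \<in> Sigma {1..N} (\<lambda>i. {1..part Y i})"
  proof
    assume "x \<in> Y"
    then show "x \<in> Sigma {1..N} (\<lambda>i. {1..part Y i})"
      using x part_pos[OF assms(1)] row_bound[OF assms(1)] mem_part[OF assms(1)] assms(2)
      by fastforce
  next
    assume "x \<in> Sigma {1..N} (\<lambda>i. {1..part Y i})"
    then show "x \<in> Y" using x mem_part[OF assms(1)] by auto
  qed
qed

lemma telescope:
  fixes g :: "int \<Rightarrow> int"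
  shows "(\<Sum>j=1..p. g (t + int j - int i + 1) - g (t + int j - int i))
       = g (t + int p - int i + 1) - g (t + 1 - int i)"
proof (induction p)
  case 0 then show ?case by (simp add: algebra_simps)
next
  case (Suc p)
  have "(\<Sum>j=1..Suc p. g (t + int j - int i + 1) - g (t + int j - int i))
     = (\<Sum>j=1..p. g (t + int j - int i + 1) - g (t + int j - int i))
       + (g (t + int (Suc p) - int i + 1) - g (t + int (Suc p) - int i))"
    by simp
  also have "\<dots> = g (t + int (Suc p) - int i + 1) - g (t + 1 - int i)"
    using Suc by (simp add: algebra_simps)
  finally show ?case .
qed

definition bt :: "cell set \<Rightarrow> int \<Rightarrow> nat \<Rightarrow> int" where
  "bt Y t i = int (part Y i) + t + 1 - int i"

definition beta :: "cell set \<Rightarrow> int \<Rightarrow> int set" where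
  "beta Y t = {bt Y t i | i. 1 \<le> i}"

lemma cells_sum:
  fixes g :: "int \<Rightarrow> int"
  assumes "is_partition Y" "card Y \<le> N"
  shows "(\<Sum>(i,j)\<in>Y. g (t + int j - int i + 1) - g (t + int j - int i))
       = (\<Sum>i=1..N. g (bt Y t i) - g (t + 1 - int i))"
proof -
  have "(\<Sum>(i,j)\<in>Y. g (t + int j - int i + 1) - g (t + int j - int i))
      = (\<Sum>(i,j)\<in>Sigma {1..N} (\<lambda>i. {1..part Y i}). g (t + int j - int i + 1) - g (t + int j - int i))"
    using cells_sigma[OF assms] by simp
  also have "\<dots> = (\<Sum>i=1..N. \<Sum>j=1..part Y i. g (t + int j - int i + 1) - g (t + int j - int i))"
    by (subst sum.Sigma) auto
  also have "\<dots> = (\<Sum>i=1..N. g (bt Y t i) - g (t + 1 - int i))"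
  proof (rule sum.cong)
    fix i
    have e: "bt Y t i = t + int (part Y i) - int i + 1" by (simp add: bt_def)
    show "(\<Sum>j=1..part Y i. g (t + int j - int i + 1) - g (t + int j - int i)) = g (bt Y t i) - g (t + 1 - int i)"
      unfolding e by (rule telescope)
  qed simp
  finally show ?thesis .
qed

lemma bt_strict:
  assumes "is_partition Y" "1 \<le> i" "i < i'"
  shows "bt Y t i' < bt Y t i"
  using part_mono[OF assms(1,2), of i'] assms(3) unfolding bt_def by linarith

lemma bt_inj:
  assumes "is_partition Y"
  shows "inj_on (bt Y t) {1..N}"
proof (rule inj_onI)
  fix i i' assume "i \<in> {1..N}" "i' \<in> {1..N}" "bt Y t i = bt Y t i'"
  then show "i = i'" using bt_strict[OF assms] by (metis atLeastAtMost_iff less_irrefl linorder_neqE_nat)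
qed

lemma bt_large:
  assumes "is_partition Y" "card Y < i"
  shows "bt Y t i = t + 1 - int i"
  using part_zero[OF assms] unfolding bt_def by simp

lemma beta_diff:
  assumes "is_partition Y" "is_partition Z" "card Y \<le> N" "card Z \<le> N"
  shows "beta Y t - beta Z t = bt Y t ` {1..N} - bt Z t ` {1..N}"
proof (rule set_eqI, rule iffI)
  fix x assume xx: "x \<in> beta Y t - beta Z t"
  then have xy: "x \<in> beta Y t" and nz: "x \<notin> beta Z t" by simp_all
  from xy obtain i where i: "1 \<le> i" "x = bt Y t i" unfolding beta_def by blast
  have "i \<le> N"
  proof (rule ccontr)
    assume "\<not> i \<le> N"
    then have c: "card Y < i" "card Z < i" using assms(3,4) by linarith+
    have "bt Y t i = bt Z t i" using bt_large[OF assms(1) c(1)] bt_large[OF assms(2) c(2)] by simp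
    moreover have "bt Z t i \<in> beta Z t" using i(1) unfolding beta_def by blast
    ultimately show False using nz i(2) by simp
  qed
  then have "x \<in> bt Y t ` {1..N}" using i by simp
  moreover have "bt Z t ` {1..N} \<subseteq> beta Z t" unfolding beta_def by auto
  ultimately show "x \<in> bt Y t ` {1..N} - bt Z t ` {1..N}" using nz by blast
next
  fix x assume x: "x \<in> bt Y t ` {1..N} - bt Z t ` {1..N}"
  then have x1: "x \<in> bt Y t ` {1..N}" and x2: "x \<notin> bt Z t ` {1..N}" by simp_all
  from x1 obtain i where i: "i \<in> {1..N}" "x = bt Y t i" by blast
  have xge: "x \<ge> t + 1 - int N" using i unfolding bt_def by simp
  have "x \<notin> beta Z t"
  proof
    assume "x \<in> beta Z t"
    then obtain i' where i': "1 \<le> i'" "x = bt Z t i'" unfolding beta_def by blast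
    show False
    proof (cases "i' \<le> N")
      case True
      then have "x \<in> bt Z t ` {1..N}" using i' by simp
      then show False using x2 by simp
    next
      case False
      then have "card Z < i'" using assms(4) by linarith
      then have "x = t + 1 - int i'" using i' bt_large[OF assms(2)] by simp
      then show False using xge False by simp
    qed
  qed
  moreover have "x \<in> beta Y t" using i unfolding beta_def by auto
  ultimately show "x \<in> beta Y t - beta Z t" by simp
qed

lemma beta_diff_fin:
  assumes "is_partition Y" "is_partition Z"
  shows "finite (beta Y t - beta Z t)"
proof -
  have "beta Y t - beta Z t = bt Y t ` {1..card Y + card Z} - bt Z t ` {1..card Y + card Z}"
    by (rule beta_diff[OF assms]) simp_all
  then show ?thesis by simp
qed

lemma sum_diff_swap:
  fixes g :: "'a \<Rightarrow> 'b::ab_group_add"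
  assumes "finite A" "finite B"
  shows "sum g (A - B) - sum g (B - A) = sum g A - sum g B"
proof -
  have "sum g A = sum g (A \<inter> B) + sum g (A - B)" using sum.Int_Diff[OF assms(1)] by blast
  moreover have "sum g B = sum g (B \<inter> A) + sum g (B - A)" using sum.Int_Diff[OF assms(2)] by blast
  ultimately show ?thesis by (simp add: Int_commute)
qed

lemma lemmaP:
  fixes g :: "int \<Rightarrow> int"
  assumes "is_partition Y" "is_partition Z"
  shows "(\<Sum>x\<in>beta Y t - beta Z t. g x) - (\<Sum>x\<in>beta Z t - beta Y t. g x)
    = (\<Sum>(i,j)\<in>Y. g (t + int j - int i + 1) - g (t + int j - int i))
    - (\<Sum>(i,j)\<in>Z. g (t + int j - int i + 1) - g (t + int j - int i))"
proof -
  define N where "N = card Y + card Z"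
  have N: "card Y \<le> N" "card Z \<le> N" unfolding N_def by auto
  have "(\<Sum>x\<in>beta Y t - beta Z t. g x) - (\<Sum>x\<in>beta Z t - beta Y t. g x)
      = (\<Sum>x\<in>bt Y t ` {1..N} - bt Z t ` {1..N}. g x) - (\<Sum>x\<in>bt Z t ` {1..N} - bt Y t ` {1..N}. g x)"
    by (simp only: beta_diff[OF assms N] beta_diff[OF assms(2,1) N(2,1)])
  also have "\<dots> = (\<Sum>x\<in>bt Y t ` {1..N}. g x) - (\<Sum>x\<in>bt Z t ` {1..N}. g x)"
    by (rule sum_diff_swap) auto
  also have "\<dots> = (\<Sum>i=1..N. g (bt Y t i)) - (\<Sum>i=1..N. g (bt Z t i))"
    by (simp only: sum.reindex[OF bt_inj[OF assms(1)]] sum.reindex[OF bt_inj[OF assms(2)]] comp_def)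
  also have "\<dots> = (\<Sum>i=1..N. g (bt Y t i) - g (t + 1 - int i)) - (\<Sum>i=1..N. g (bt Z t i) - g (t + 1 - int i))"
    by (simp only: sum_subtractf diff_diff_eq2 diff_add_cancel)
  also have "\<dots> = (\<Sum>(i,j)\<in>Y. g (t + int j - int i + 1) - g (t + int j - int i))
    - (\<Sum>(i,j)\<in>Z. g (t + int j - int i + 1) - g (t + int j - int i))"
    by (simp only: cells_sum[OF assms(1) N(1)] cells_sum[OF assms(2) N(2)])
  finally show ?thesis .
qed




definition dg :: "cell \<Rightarrow> int" where "dg x = int (snd x) - int (fst x)"

lemma ribbon_skew:
  assumes "is_ribbon R"
  obtains Y Z where "is_partition Y" "is_partition Z" "Z \<subseteq> Y" "R = Y - Z"
  using assms unfolding is_ribbon_def is_skew_def by blast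

lemma ribbon_fin: "is_ribbon R \<Longrightarrow> finite R"
  by (metis ribbon_skew part_fin finite_Diff)

lemma no_diag:
  assumes Y: "is_partition Y" and Z: "is_partition Z"
    and a: "(i,j) \<in> Y - Z" and b: "(i',j') \<in> Y - Z" and lt: "i < i'" "j < j'"
  shows "(i+1,j) \<in> Y - Z \<and> (i,j+1) \<in> Y - Z \<and> (i+1,j+1) \<in> Y - Z"
proof -
  have p: "1 \<le> i" "1 \<le> j" using part_pos[OF Y] a by auto
  have bY: "(i',j') \<in> Y" using b by simp
  have y1: "(i+1,j) \<in> Y" using part_closed[OF Y bY, of "i+1" j] lt p by simp
  have y2: "(i,j+1) \<in> Y" using part_closed[OF Y bY, of i "j+1"] lt p by simp
  have y3: "(i+1,j+1) \<in> Y" using part_closed[OF Y bY, of "i+1" "j+1"] lt p by simp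
  have nz: "(c,e) \<notin> Z" if "i \<le> c" "j \<le> e" for c e
  proof
    assume "(c,e) \<in> Z"
    then have "(i,j) \<in> Z" using part_closed[OF Z, of c e i j] that p by simp
    then show False using a by simp
  qed
  show ?thesis using y1 y2 y3 nz by simp
qed

lemma ribbon_inj:
  assumes "is_ribbon R"
  shows "inj_on dg R"
proof (rule inj_onI)
  fix x y assume x: "x \<in> R" and y: "y \<in> R" and e: "dg x = dg y"
  obtain Y Z where Y: "is_partition Y" and Z: "is_partition Z" and R: "R = Y - Z"
    using ribbon_skew[OF assms] by metis
  have nosq: "\<not> (\<exists>i j. (i,j) \<in> R \<and> (i+1,j) \<in> R \<and> (i,j+1) \<in> R \<and> (i+1,j+1) \<in> R)"
    using assms unfolding is_ribbon_def by blast
  obtain i j where xi: "x = (i,j)" by (cases x)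
  obtain i' j' where yi: "y = (i',j')" by (cases y)
  have e': "int j - int i = int j' - int i'" using e xi yi by (simp add: dg_def)
  show "x = y"
  proof (cases i i' rule: linorder_cases)
    case less
    then have "j < j'" using e' by linarith
    then show ?thesis using no_diag[OF Y Z, of i j i' j'] x y xi yi R less nosq by blast
  next
    case equal
    then show ?thesis using e' xi yi by simp
  next
    case greater
    then have "j' < j" using e' by linarith
    then show ?thesis using no_diag[OF Y Z, of i' j' i j] x y xi yi R greater nosq by blast
  qed
qed

lemma adj_step:
  assumes "(y,z) \<in> adj_in R"
  shows "z \<in> R \<and> dg z \<le> dg y + 1"
  using assms unfolding adj_in_def dg_def by auto

lemma ribbon_interval:
  assumes "is_ribbon R" "x \<in> R" "y \<in> R" "dg x \<le> c" "c \<le> dg y"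
  shows "c \<in> dg ` R"
proof -
  have "(x,y) \<in> (adj_in R)\<^sup>*" using assms(1-3) unfolding is_ribbon_def by blast
  then have "\<forall>c. dg x \<le> c \<and> c \<le> dg y \<longrightarrow> c \<in> dg ` R"
  proof (induction rule: rtrancl_induct)
    case base
    then show ?case using assms(2) by force
  next
    case (step y z)
    have z: "z \<in> R" "dg z \<le> dg y + 1" using adj_step[OF step(2)] by auto
    show ?case
    proof (intro allI impI)
      fix c assume c: "dg x \<le> c \<and> c \<le> dg z"
      show "c \<in> dg ` R"
      proof (cases "c \<le> dg y")
        case True then show ?thesis using step(3) c by blast
      next
        case False
        then have "c = dg z" using c z by linarith
        then show ?thesis using z by blast
      qed
    qed
  qed
  then show ?thesis using assms(4,5) by blast
qed

lemma ribbon_image: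
  assumes "is_ribbon R"
  shows "dg ` R = {Min (dg ` R) ..< Min (dg ` R) + int (card R)}"
proof -
  have fin: "finite (dg ` R)" using ribbon_fin[OF assms] by simp
  have ne: "dg ` R \<noteq> {}" using assms unfolding is_ribbon_def by simp
  define a where "a = Min (dg ` R)"
  define b where "b = Max (dg ` R)"
  have aR: "a \<in> dg ` R" unfolding a_def using fin ne by simp
  have bR: "b \<in> dg ` R" unfolding b_def using fin ne by simp
  have eq: "dg ` R = {a..b}"
  proof
    show "dg ` R \<subseteq> {a..b}" unfolding a_def b_def using fin by auto
    show "{a..b} \<subseteq> dg ` R"
    proof
      fix c assume c: "c \<in> {a..b}"
      obtain x where x: "x \<in> R" "dg x = a" using aR by blast
      obtain y where y: "y \<in> R" "dg y = b" using bR by blast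
      show "c \<in> dg ` R" using ribbon_interval[OF assms x(1) y(1)] x(2) y(2) c by simp
    qed
  qed
  have "card (dg ` R) = card R" using card_image[OF ribbon_inj[OF assms]] .
  then have "card R = nat (b - a + 1)" using eq by simp
  moreover have "a \<le> b" using aR fin unfolding b_def by simp
  ultimately have "b + 1 = a + int (card R)" by simp
  then have "{a..b} = {a..<a + int (card R)}" by auto
  then show ?thesis using eq unfolding a_def by simp
qed

lemma rhead_props:
  assumes "is_ribbon R"
  shows "rhead R \<in> R \<and> dg (rhead R) = Min (dg ` R)"
proof -
  have fin: "finite (dg ` R)" using ribbon_fin[OF assms] by simp
  have ne: "dg ` R \<noteq> {}" using assms unfolding is_ribbon_def by simp
  obtain x where x: "x \<in> R" "dg x = Min (dg ` R)" using Min_in[OF fin ne] by (metis imageE)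
  have "rhead R = x"
    unfolding rhead_def
  proof (rule the_equality)
    show "x \<in> R \<and> (\<forall>c'\<in>R. int (snd x) - int (fst x) \<le> int (snd c') - int (fst c'))"
      using x fin by (auto simp: dg_def[symmetric])
    fix c assume c: "c \<in> R \<and> (\<forall>c'\<in>R. int (snd c) - int (fst c) \<le> int (snd c') - int (fst c'))"
    then have "dg c \<le> dg x" using x unfolding dg_def by blast
    moreover have "dg x \<le> dg c" using x c fin by simp
    ultimately show "c = x" using ribbon_inj[OF assms] c x by (meson inj_onD order_antisym)
  qed
  then show ?thesis using x by simp
qed

definition Ssum :: "(int \<Rightarrow> 'a::comm_monoid_add) \<Rightarrow> int \<Rightarrow> nat \<Rightarrow> 'a" where
  "Ssum f A h = (\<Sum>k<h. f (A + int k))"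

lemma int_interval_image: "{a..<a + int h} = (\<lambda>k. a + int k) ` {..<h}"
proof (rule set_eqI, rule iffI)
  fix z assume "z \<in> {a..<a + int h}"
  then show "z \<in> (\<lambda>k. a + int k) ` {..<h}"
    by (intro image_eqI[where x="nat (z - a)"]) auto
qed auto

lemma ribbon_sum:
  assumes "is_ribbon R"
  shows "(\<Sum>x\<in>R. f (t + dg x)) = Ssum f (t + dg (rhead R)) (card R)"
proof -
  have "(\<Sum>x\<in>R. f (t + dg x)) = (\<Sum>z\<in>dg ` R. f (t + z))"
    using sum.reindex[OF ribbon_inj[OF assms], of "\<lambda>z. f (t + z)"] by (simp add: comp_def)
  also have "\<dots> = (\<Sum>z\<in>(\<lambda>k. dg (rhead R) + int k) ` {..<card R}. f (t + z))"
    using ribbon_image[OF assms] rhead_props[OF assms] int_interval_image by metis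
  also have "\<dots> = (\<Sum>k<card R. f (t + (dg (rhead R) + int k)))"
    by (subst sum.reindex) (auto simp: inj_on_def)
  finally show ?thesis unfolding Ssum_def by (simp add: add.assoc)
qed

definition per :: "nat \<Rightarrow> (int \<Rightarrow> 'a) \<Rightarrow> bool" where
  "per n f \<longleftrightarrow> (\<forall>z z'. z mod int n = z' mod int n \<longrightarrow> f z = f z')"

lemma Ssum_mod:
  assumes "per n f" "A mod int n = A' mod int n"
  shows "Ssum f A h = Ssum f A' h"
  unfolding Ssum_def
proof (rule sum.cong)
  fix k
  have "(A + int k) mod int n = (A' + int k) mod int n" using assms(2) by (rule mod_add_cong) simp
  then show "f (A + int k) = f (A' + int k)" using assms(1) unfolding per_def by blast
qed simp

lemma Ssum_step:
  fixes f :: "int \<Rightarrow> 'a::cancel_comm_monoid_add"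
  assumes "per n f" "int n dvd int h"
  shows "Ssum f (A + 1) h = Ssum f A h"
proof -
  have "f (A + int h) = f A"
    using assms unfolding per_def by (metis add.right_neutral dvd_imp_mod_0 mod_add_right_eq)
  have "Ssum f A (Suc h) = f A + Ssum f (A + 1) h"
    unfolding Ssum_def by (subst sum.lessThan_Suc_shift) (simp add: ac_simps)
  moreover have "Ssum f A (Suc h) = Ssum f A h + f (A + int h)"
    unfolding Ssum_def by simp
  ultimately have "f A + Ssum f (A + 1) h = f A + Ssum f A h"
    using \<open>f (A + int h) = f A\<close> by (simp add: add.commute)
  then show ?thesis by simp
qed

lemma Ssum_dvd:
  fixes f :: "int \<Rightarrow> 'a::cancel_comm_monoid_add"
  assumes "per n f" "int n dvd int h"
  shows "Ssum f A h = Ssum f A' h"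
proof -
  have "Ssum f B h = Ssum f 0 h" for B
  proof (induction B rule: int_induct[where k=0])
    case base then show ?case by simp
  next
    case (step1 i) then show ?case using Ssum_step[OF assms, of i] by simp
  next
    case (step2 i) then show ?case using Ssum_step[OF assms, of "i - 1"] by simp
  qed
  then show ?thesis by metis
qed




lemma decomp_spec:
  assumes n: "1 \<le> n" and l: "1 \<le> l"
  shows "decomp n l k = ((k-1) mod int n + 1, ((k-1) div int n) mod int l + 1, ((k-1) div int n) div int l)"
  unfolding decomp_def
proof (rule the_equality)
  let ?q = "(k-1) div int n"
  have e1: "k - 1 = (k-1) mod int n + int n * ?q" by simp
  have e2: "?q = ?q mod int l + int l * (?q div int l)" by simp
  have "k = (k-1) mod int n + 1 + int n * (?q mod int l + 1 - 1) + int n * int l * (?q div int l)"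
  proof -
    have "int n * (?q mod int l + 1 - 1) + int n * int l * (?q div int l) = int n * ?q"
      using e2 by (metis add_diff_cancel_right' distrib_left mult.assoc)
    then show ?thesis using e1 by linarith
  qed
  then show "case ((k-1) mod int n + 1, ?q mod int l + 1, ?q div int l) of (c, d, m) \<Rightarrow>
      1 \<le> c \<and> c \<le> int n \<and> 1 \<le> d \<and> d \<le> int l \<and> k = c + int n * (d - 1) + int n * int l * m"
  proof -
    have "(k-1) mod int n < int n" "0 \<le> (k-1) mod int n" using n by simp_all
    moreover have "?q mod int l < int l" "0 \<le> ?q mod int l" using l by simp_all
    ultimately show ?thesis using \<open>k = _\<close> by simp
  qed
next
  fix p :: "int \<times> int \<times> int"
  assume a: "case p of (c, d, m) \<Rightarrow> 1 \<le> c \<and> c \<le> int n \<and> 1 \<le> d \<and> d \<le> int l \<and> k = c + int n * (d - 1) + int n * int l * m"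
  obtain c d m where p: "p = (c,d,m)" by (cases p)
  have c: "1 \<le> c" "c \<le> int n" and d: "1 \<le> d" "d \<le> int l" and k: "k = c + int n * (d - 1) + int n * int l * m"
    using a p by auto
  define X where "X = (d - 1) + int l * m"
  have kX: "k - 1 = (c - 1) + int n * X" unfolding X_def k by (simp add: algebra_simps)
  have np: "int n > 0" using n by simp
  have lp: "int l > 0" using l by simp
  have cm: "(k-1) mod int n = c - 1"
    unfolding kX using c np by (simp add: mod_pos_pos_trivial)
  have cd: "(k-1) div int n = X"
    unfolding kX using c np by (simp add: div_pos_pos_trivial)
  have dm: "X mod int l = d - 1" unfolding X_def using d lp by (simp add: mod_pos_pos_trivial)
  have dd: "X div int l = m" unfolding X_def using d lp by (simp add: div_pos_pos_trivial)
  show "p = ((k-1) mod int n + 1, ((k-1) div int n) mod int l + 1, ((k-1) div int n) div int l)"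
    using p cm cd dm dd by simp
qed

definition cc :: "nat \<Rightarrow> int \<Rightarrow> int" where "cc n x = (x - 1) mod int n + 1"

definition KK :: "nat \<Rightarrow> nat \<Rightarrow> int \<Rightarrow> nat \<Rightarrow> int" where
  "KK n l x b = cc n x + int n * (int b - 1) + int l * (x - cc n x)"

definition ww :: "nat \<Rightarrow> nat \<Rightarrow> int \<Rightarrow> int" where
  "ww n l z = (cc n (z+1) - cc n z) + int l * (1 - (cc n (z+1) - cc n z))"

lemma KK_step: "KK n l (z + 1) b - KK n l z b = ww n l z"
  unfolding KK_def ww_def by (simp add: algebra_simps)

lemma ww_per: "per n (ww n l)"
  unfolding per_def
proof (intro allI impI)
  fix z z' :: int assume e: "z mod int n = z' mod int n"
  have "(z + 1 - 1) mod int n = (z' + 1 - 1) mod int n" using e by simp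
  moreover have "(z - 1) mod int n = (z' - 1) mod int n" using e by (rule mod_diff_cong) simp
  ultimately show "ww n l z = ww n l z'" unfolding ww_def cc_def by simp
qed

lemma KK_inv:
  assumes n: "1 \<le> n" and l: "1 \<le> l"
  shows "KK n l (phi n l k) (dfun n l k) = k"
proof -
  let ?q = "(k-1) div int n"
  have D: "decomp n l k = ((k-1) mod int n + 1, ?q mod int l + 1, ?q div int l)"
    by (rule decomp_spec[OF n l])
  have ph: "phi n l k = (k-1) mod int n + 1 + int n * (?q div int l)"
    unfolding phi_def cfun_def mfun_def D by simp
  have df: "int (dfun n l k) = ?q mod int l + 1"
    unfolding dfun_def D using l by simp
  have np: "int n > 0" using n by simp
  have "cc n (phi n l k) = (k-1) mod int n + 1"
    unfolding cc_def ph using np by (simp add: mod_pos_pos_trivial)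
  then have "KK n l (phi n l k) (dfun n l k)
     = (k-1) mod int n + 1 + int n * (?q mod int l) + int l * (int n * (?q div int l))"
    unfolding KK_def df ph by simp
  also have "\<dots> = k"
  proof -
    have h: "int n * (?q mod int l) + int l * (int n * (?q div int l)) = int n * ?q"
      by (metis distrib_left mult.left_commute mod_mult_div_eq)
    show ?thesis using h mod_mult_div_eq[of "k-1" "int n"] by linarith
  qed
  finally show ?thesis .
qed




definition Pset :: "(nat \<Rightarrow> cell set) \<Rightarrow> (nat \<Rightarrow> int) \<Rightarrow> nat \<Rightarrow> (int \<times> nat) set" where
  "Pset blam s l = {(int (part (blam b) i) + s b + 1 - int i, b) | i b. 1 \<le> i \<and> 1 \<le> b \<and> b \<le> l}"

lemma mem_Pset: "(x,b) \<in> Pset blam s l \<longleftrightarrow> b \<in> {1..l} \<and> x \<in> beta (blam b) (s b)"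
  by (auto simp: Pset_def beta_def bt_def)

lemma Pset_diff:
  "Pset A s l - Pset B s l = (\<Union>b\<in>{1..l}. (\<lambda>x. (x,b)) ` (beta (A b) (s b) - beta (B b) (s b)))"
proof (rule set_eqI)
  fix p :: "int \<times> nat"
  obtain x b where p: "p = (x,b)" by (cases p)
  show "p \<in> Pset A s l - Pset B s l \<longleftrightarrow> p \<in> (\<Union>b\<in>{1..l}. (\<lambda>x. (x,b)) ` (beta (A b) (s b) - beta (B b) (s b)))"
    unfolding p by (auto simp: mem_Pset)
qed

lemma sum_Pset_diff:
  fixes F :: "int \<times> nat \<Rightarrow> int"
  assumes "\<forall>b\<in>{1..l}. is_partition (A b)" "\<forall>b\<in>{1..l}. is_partition (B b)"
  shows "(\<Sum>p\<in>Pset A s l - Pset B s l. F p) = (\<Sum>b=1..l. \<Sum>x\<in>beta (A b) (s b) - beta (B b) (s b). F (x,b))"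
proof -
  have "(\<Sum>p\<in>Pset A s l - Pset B s l. F p)
     = (\<Sum>b=1..l. \<Sum>p\<in>(\<lambda>x. (x,b)) ` (beta (A b) (s b) - beta (B b) (s b)). F p)"
    unfolding Pset_diff
  proof (rule sum.UNION_disjoint)
    show "\<forall>b\<in>{1..l}. finite ((\<lambda>x. (x, b)) ` (beta (A b) (s b) - beta (B b) (s b)))"
      using assms beta_diff_fin by blast
  qed auto
  also have "\<dots> = (\<Sum>b=1..l. \<Sum>x\<in>beta (A b) (s b) - beta (B b) (s b). F (x,b))"
    by (rule sum.cong) (auto simp: sum.reindex inj_on_def)
  finally show ?thesis .
qed

lemma corresp_img:
  assumes "corresp n l s blam lam"
  shows "Pset blam s l = (\<lambda>k. (phi n l k, dfun n l k)) ` beta lam (\<Sum>b=1..l. s b)"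
  using assms unfolding corresp_def Pset_def beta_def bt_def by auto

lemma card_formula:
  assumes n: "1 \<le> n" and l: "1 \<le> l"
    and A: "\<forall>b\<in>{1..l}. is_partition (blam b)" and B: "\<forall>b\<in>{1..l}. is_partition (bmu b)"
    and pl: "is_partition lam" and pm: "is_partition mu"
    and cl: "corresp n l s blam lam" and cm: "corresp n l s bmu mu"
  shows "int (card lam) - int (card mu) =
     (\<Sum>b=1..l. (\<Sum>x\<in>blam b. ww n l (s b + dg x)) - (\<Sum>x\<in>bmu b. ww n l (s b + dg x)))"
proof -
  define S where "S = (\<Sum>b=1..l. s b)"
  define e where "e = (\<lambda>k. (phi n l k, dfun n l k))"
  define Kf where "Kf = (\<lambda>(x,b). KK n l x b)"
  have inv: "Kf (e k) = k" for k unfolding Kf_def e_def using KK_inv[OF n l] by simp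
  have inj: "inj e" by (metis inv injI)
  have PA: "Pset blam s l = e ` beta lam S" using corresp_img[OF cl] unfolding e_def S_def .
  have PB: "Pset bmu s l = e ` beta mu S" using corresp_img[OF cm] unfolding e_def S_def .
  have one: "(\<lambda>(i::nat,j::nat). (t + int j - int i + 1) - (t + int j - int i)) = (\<lambda>_. 1::int)" for t
    by auto
  have step1: "int (card lam) - int (card mu)
      = (\<Sum>x\<in>beta lam S - beta mu S. x) - (\<Sum>x\<in>beta mu S - beta lam S. x)"
    using lemmaP[OF pl pm, of "\<lambda>x. x" S] unfolding one by simp
  have tr: "(\<Sum>x\<in>beta Y S - beta Z S. x) = (\<Sum>p\<in>e ` beta Y S - e ` beta Z S. Kf p)" for Y Z
  proof -
    have "e ` beta Y S - e ` beta Z S = e ` (beta Y S - beta Z S)"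
      using image_set_diff[OF inj] by simp
    moreover have "(\<Sum>p\<in>e ` (beta Y S - beta Z S). Kf p) = (\<Sum>x\<in>beta Y S - beta Z S. x)"
      using sum.reindex[of e "beta Y S - beta Z S" Kf] inj inv by (simp add: inj_on_def comp_def)
    ultimately show ?thesis by simp
  qed
  have cellconv: "(\<Sum>(i,j)\<in>Y. KK n l (s b + int j - int i + 1) b - KK n l (s b + int j - int i) b)
      = (\<Sum>x\<in>Y. ww n l (s b + dg x))" for Y b
    by (rule sum.cong) (auto simp: KK_step dg_def add_diff_eq)
  have "int (card lam) - int (card mu)
      = (\<Sum>p\<in>Pset blam s l - Pset bmu s l. Kf p) - (\<Sum>p\<in>Pset bmu s l - Pset blam s l. Kf p)"
    unfolding step1 PA PB tr by simp
  also have "\<dots> = (\<Sum>b=1..l. \<Sum>x\<in>beta (blam b) (s b) - beta (bmu b) (s b). KK n l x b)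
      - (\<Sum>b=1..l. \<Sum>x\<in>beta (bmu b) (s b) - beta (blam b) (s b). KK n l x b)"
    unfolding sum_Pset_diff[OF A B] sum_Pset_diff[OF B A] Kf_def by simp
  also have "\<dots> = (\<Sum>b=1..l. (\<Sum>x\<in>beta (blam b) (s b) - beta (bmu b) (s b). KK n l x b)
      - (\<Sum>x\<in>beta (bmu b) (s b) - beta (blam b) (s b). KK n l x b))"
    by (simp add: sum_subtractf)
  also have "\<dots> = (\<Sum>b=1..l. (\<Sum>x\<in>blam b. ww n l (s b + dg x)) - (\<Sum>x\<in>bmu b. ww n l (s b + dg x)))"
  proof (rule sum.cong)
    fix b assume b: "b \<in> {1..l}"
    show "(\<Sum>x\<in>beta (blam b) (s b) - beta (bmu b) (s b). KK n l x b)
      - (\<Sum>x\<in>beta (bmu b) (s b) - beta (blam b) (s b). KK n l x b)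
      = (\<Sum>x\<in>blam b. ww n l (s b + dg x)) - (\<Sum>x\<in>bmu b. ww n l (s b + dg x))"
      using lemmaP[of "blam b" "bmu b" "\<lambda>x. KK n l x b" "s b"] A B b unfolding cellconv by simp
  qed simp
  finally show ?thesis .
qed




lemma J1_ne: "J1 l lam mu d d' \<Longrightarrow> lam d \<noteq> mu d \<and> lam d' \<noteq> mu d'"
  unfolding J1_def is_ribbon_def by auto

lemma J2_ne: "J2 l lam mu d \<Longrightarrow> lam d \<noteq> mu d"
  unfolding J2_def is_ribbon_def by auto

lemma J1_unique:
  assumes a: "J1 l lam mu d d'" and b: "J1 l lam mu e e'"
  shows "d = e \<and> d' = e'"
proof -
  have ne: "lam d \<noteq> mu d" "lam d' \<noteq> mu d'" using J1_ne[OF a] by auto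
  have mem: "d \<in> {1..l}" "d' \<in> {1..l}" using a unfolding J1_def by auto
  have oth: "\<forall>b\<in>{1..l}. b \<noteq> e \<and> b \<noteq> e' \<longrightarrow> lam b = mu b" using b unfolding J1_def by blast
  have de: "d = e \<or> d = e'" using oth mem ne by blast
  have de': "d' = e \<or> d' = e'" using oth mem ne by blast
  have "d \<noteq> e'"
  proof
    assume "d = e'"
    then have "mu d \<subseteq> lam d" "lam d \<subseteq> mu d" using a b unfolding J1_def by auto
    then show False using ne by blast
  qed
  moreover have "d' \<noteq> e"
  proof
    assume "d' = e"
    then have "lam d' \<subseteq> mu d'" "mu d' \<subseteq> lam d'" using a b unfolding J1_def by auto
    then show False using ne by blast
  qed
  ultimately show ?thesis using de de' by blast
qed

lemma J2_unique:
  assumes a: "J2 l lam mu d" and b: "J2 l lam mu e"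
  shows "d = e"
  using J2_ne[OF a] a b unfolding J2_def by blast

lemma J1_J2_excl:
  assumes a: "J1 l lam mu d d'" and b: "J2 l lam mu e"
  shows False
proof -
  have ne: "lam d \<noteq> mu d" "lam d' \<noteq> mu d'" using J1_ne[OF a] by auto
  have "d = e" "d' = e" using a b ne unfolding J1_def J2_def by blast+
  then show False using a unfolding J1_def by simp
qed

lemma head_res_dg: "head_res n s d R = (s d + dg (rhead R)) mod int n"
  unfolding head_res_def res_def content_def dg_def by (simp add: add_diff_eq)

lemma jcoef_J1:
  assumes a: "J1 l lam mu d d'"
  shows "jcoef n l s lam mu = (if head_res n s d (lam d - mu d) = head_res n s d' (mu d' - lam d')
      then (-1) ^ (ht (lam d - mu d) + ht (mu d' - lam d')) else 0)"
proof -
  have ex: "\<exists>d d'. J1 l lam mu d d'" using a by blast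
  have sm: "(SOME (d, d'). J1 l lam mu d d') = (d, d')"
  proof (rule some_equality)
    show "case (d, d') of (d, d') \<Rightarrow> J1 l lam mu d d'" using a by simp
  next
    fix q :: "nat \<times> nat" assume q: "case q of (d, d') \<Rightarrow> J1 l lam mu d d'"
    obtain x y where qq: "q = (x, y)" by (cases q)
    have "J1 l lam mu x y" using q unfolding qq by simp
    then have "d = x \<and> d' = y" by (rule J1_unique[OF a])
    then show "q = (d, d')" unfolding qq by simp
  qed
  show ?thesis unfolding jcoef_def if_P[OF ex] sm Let_def prod.case ..
qed

lemma jcoef_J2:
  assumes a: "J2 l lam mu d"
  shows "jcoef n l s lam mu = (-1) ^ (ht (lam d - (lam d \<inter> mu d)) + ht (mu d - (lam d \<inter> mu d))) *
     (if head_res n s d (lam d - (lam d \<inter> mu d)) = head_res n s d (mu d - (lam d \<inter> mu d)) \<and> \<not> (int n dvd int (card (lam d - (lam d \<inter> mu d)))) then 1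
      else if head_res n s d (lam d - (lam d \<inter> mu d)) \<noteq> head_res n s d (mu d - (lam d \<inter> mu d)) \<and> int n dvd int (card (lam d - (lam d \<inter> mu d))) then -1
      else 0)"
proof -
  have nex: "\<not> (\<exists>d d'. J1 l lam mu d d')"
  proof
    assume "\<exists>d d'. J1 l lam mu d d'"
    then obtain x y where "J1 l lam mu x y" by blast
    then show False using J1_J2_excl a by metis
  qed
  have ex: "\<exists>d. J2 l lam mu d" using a by (rule exI)
  have sm: "(SOME d. J2 l lam mu d) = d"
  proof (rule some_equality)
    show "J2 l lam mu d" by (rule a)
    fix e assume "J2 l lam mu e"
    then show "e = d" using J2_unique[OF a] by metis
  qed
  show ?thesis unfolding jcoef_def if_not_P[OF nex] if_P[OF ex] sm Let_def ..
qed

lemma key_J1: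
  fixes f :: "int \<Rightarrow> 'a::comm_monoid_add"
  assumes j: "jcoef n l s lam mu \<noteq> 0" and a: "J1 l lam mu d d'" and p: "per n f"
  shows "(\<Sum>x\<in>lam d - mu d. f (s d + dg x)) = (\<Sum>x\<in>mu d' - lam d'. f (s d' + dg x))"
proof -
  have hr: "head_res n s d (lam d - mu d) = head_res n s d' (mu d' - lam d')"
  proof (rule ccontr)
    assume "head_res n s d (lam d - mu d) \<noteq> head_res n s d' (mu d' - lam d')"
    then have "jcoef n l s lam mu = 0" unfolding jcoef_J1[OF a] by simp
    then show False using j by simp
  qed
  have r1: "is_ribbon (lam d - mu d)" and r2: "is_ribbon (mu d' - lam d')"
    and c: "card (lam d - mu d) = card (mu d' - lam d')" using a unfolding J1_def by auto
  show ?thesis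
    unfolding ribbon_sum[OF r1] ribbon_sum[OF r2] c
    by (rule Ssum_mod[OF p]) (use hr in \<open>simp add: head_res_dg\<close>)
qed

lemma key_J2:
  fixes f :: "int \<Rightarrow> 'a::cancel_comm_monoid_add"
  assumes j: "jcoef n l s lam mu \<noteq> 0" and a: "J2 l lam mu d" and p: "per n f"
  shows "(\<Sum>x\<in>lam d - (lam d \<inter> mu d). f (s d + dg x)) = (\<Sum>x\<in>mu d - (lam d \<inter> mu d). f (s d + dg x))"
proof -
  define R1 where "R1 = lam d - (lam d \<inter> mu d)"
  define R2 where "R2 = mu d - (lam d \<inter> mu d)"
  have r1: "is_ribbon R1" and r2: "is_ribbon R2" and c: "card R1 = card R2"
    using a unfolding J2_def R1_def R2_def by auto
  have cases: "(head_res n s d R1 = head_res n s d R2 \<and> \<not> int n dvd int (card R1))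
     \<or> (head_res n s d R1 \<noteq> head_res n s d R2 \<and> int n dvd int (card R1))"
  proof (rule ccontr)
    assume "\<not> ?thesis"
    then have "jcoef n l s lam mu = 0" unfolding jcoef_J2[OF a] R1_def R2_def by auto
    then show False using j by simp
  qed
  have "(\<Sum>x\<in>R1. f (s d + dg x)) = (\<Sum>x\<in>R2. f (s d + dg x))"
    unfolding ribbon_sum[OF r1] ribbon_sum[OF r2] c[symmetric]
  proof (cases "head_res n s d R1 = head_res n s d R2")
    case True
    then show "Ssum f (s d + dg (rhead R1)) (card R1) = Ssum f (s d + dg (rhead R2)) (card R1)"
      by (intro Ssum_mod[OF p]) (simp add: head_res_dg)
  next
    case False
    then have "int n dvd int (card R1)" using cases by blast
    then show "Ssum f (s d + dg (rhead R1)) (card R1) = Ssum f (s d + dg (rhead R2)) (card R1)"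
      by (rule Ssum_dvd[OF p])
  qed
  then show ?thesis unfolding R1_def R2_def .
qed

lemma Ncount_sum:
  assumes "finite R"
  shows "Ncount n s i (comp_nodes d R) = (\<Sum>x\<in>R. (\<lambda>z. if z mod int n = i mod int n then 1 else 0) (s d + dg x))"
proof -
  let ?g = "\<lambda>(a::nat, b::nat). (a, b, d)"
  let ?P = "\<lambda>x. (s d + dg x) mod int n = i mod int n"
  have inj: "inj_on ?g R" by (auto simp: inj_on_def)
  have "{\<gamma>\<in>comp_nodes d R. res n (content s \<gamma>) = i mod int n} = ?g ` {x\<in>R. ?P x}"
    unfolding comp_nodes_def res_def content_def dg_def by (auto simp: add_diff_eq)
  then have "Ncount n s i (comp_nodes d R) = card {x\<in>R. ?P x}"
    unfolding Ncount_def using card_image[OF inj_on_subset[OF inj]] by simp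
  also have "\<dots> = (\<Sum>x\<in>R. if ?P x then 1 else 0)"
    using sum.If_cases[OF assms, of ?P "\<lambda>_. 1::nat" "\<lambda>_. 0"] by (simp add: Int_def)
  finally show ?thesis by simp
qed

lemma per_ind: "per n (\<lambda>z. if z mod int n = i mod int n then (1::nat) else 0)"
  unfolding per_def by auto

theorem mainTheorem10:
  fixes n l m :: nat and s :: "nat \<Rightarrow> int"
    and blam bmu :: "nat \<Rightarrow> cell set" and lam mu :: "cell set"
  assumes "1 \<le> n" and "1 \<le> l" and "1 \<le> m"
    and "blam \<in> Pi_lm l m" and "bmu \<in> Pi_lm l m"
    and "is_partition lam" and "is_partition mu"
    and "corresp n l s blam lam" and "corresp n l s bmu mu"
    and "jcoef n l s blam bmu \<noteq> 0"
  shows "((\<exists>d d'. J1 l blam bmu d d') \<or> (\<exists>d. J2 l blam bmu d))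
    \<and> (\<forall>d d'. J1 l blam bmu d d' \<longrightarrow>
          (\<forall>i::int. Ncount n s i (comp_nodes d (blam d - bmu d))
                   = Ncount n s i (comp_nodes d' (bmu d' - blam d'))))
    \<and> (\<forall>d. J2 l blam bmu d \<longrightarrow>
          (\<forall>i::int. Ncount n s i (comp_nodes d (blam d - (blam d \<inter> bmu d)))
                   = Ncount n s i (comp_nodes d (bmu d - (blam d \<inter> bmu d)))))
    \<and> card lam = card mu"
proof -
  note j = assms(10)
  have JJ: "(\<exists>d d'. J1 l blam bmu d d') \<or> (\<exists>d. J2 l blam bmu d)"
  proof (rule ccontr)
    assume "\<not> ?thesis"
    then have n1: "\<not> (\<exists>d d'. J1 l blam bmu d d')" and n2: "\<not> (\<exists>d. J2 l blam bmu d)" by simp_all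
    have "jcoef n l s blam bmu = 0" unfolding jcoef_def if_not_P[OF n1] if_not_P[OF n2] by (rule refl)
    then show False using j by simp
  qed
  have P1: "\<forall>d d'. J1 l blam bmu d d' \<longrightarrow>
          (\<forall>i::int. Ncount n s i (comp_nodes d (blam d - bmu d))
                   = Ncount n s i (comp_nodes d' (bmu d' - blam d')))"
  proof (intro allI impI)
    fix d d' i assume a: "J1 l blam bmu d d'"
    have r1: "is_ribbon (blam d - bmu d)" and r2: "is_ribbon (bmu d' - blam d')"
      using a unfolding J1_def by auto
    show "Ncount n s i (comp_nodes d (blam d - bmu d)) = Ncount n s i (comp_nodes d' (bmu d' - blam d'))"
      unfolding Ncount_sum[OF ribbon_fin[OF r1]] Ncount_sum[OF ribbon_fin[OF r2]]
      by (rule key_J1[OF j a per_ind])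
  qed
  have P2: "\<forall>d. J2 l blam bmu d \<longrightarrow>
          (\<forall>i::int. Ncount n s i (comp_nodes d (blam d - (blam d \<inter> bmu d)))
                   = Ncount n s i (comp_nodes d (bmu d - (blam d \<inter> bmu d))))"
  proof (intro allI impI)
    fix d i assume a: "J2 l blam bmu d"
    have r1: "is_ribbon (blam d - (blam d \<inter> bmu d))" and r2: "is_ribbon (bmu d - (blam d \<inter> bmu d))"
      using a unfolding J2_def by auto
    show "Ncount n s i (comp_nodes d (blam d - (blam d \<inter> bmu d))) = Ncount n s i (comp_nodes d (bmu d - (blam d \<inter> bmu d)))"
      unfolding Ncount_sum[OF ribbon_fin[OF r1]] Ncount_sum[OF ribbon_fin[OF r2]]
      by (rule key_J2[OF j a per_ind])
  qed
  have A: "\<forall>b\<in>{1..l}. is_partition (blam b)" using assms(4) unfolding Pi_lm_def is_multipartition_def by blast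
  have B: "\<forall>b\<in>{1..l}. is_partition (bmu b)" using assms(5) unfolding Pi_lm_def is_multipartition_def by blast
  define C where "C = (\<lambda>b Y. (\<Sum>x\<in>Y. ww n l (s b + dg x)))"
  define T where "T = (\<lambda>b. C b (blam b) - C b (bmu b))"
  have cf: "int (card lam) - int (card mu) = (\<Sum>b=1..l. T b)"
    using card_formula[OF assms(1,2) A B assms(6,7,8,9)] unfolding T_def C_def .
  have split: "C b Y = C b (Y - W) + C b W" if "W \<subseteq> Y" "finite Y" for b Y W
    unfolding C_def using sum.subset_diff[OF that] .
  have "(\<Sum>b=1..l. T b) = 0"
    using JJ
  proof
    assume "\<exists>d d'. J1 l blam bmu d d'"
    then obtain d d' where a: "J1 l blam bmu d d'" by blast
    have dd: "d \<in> {1..l}" "d' \<in> {1..l}" "d \<noteq> d'" and sub: "bmu d \<subseteq> blam d" "blam d' \<subseteq> bmu d'"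
      and oth: "\<forall>b\<in>{1..l}. b \<noteq> d \<and> b \<noteq> d' \<longrightarrow> blam b = bmu b"
      using a unfolding J1_def by auto
    have "(\<Sum>b=1..l. T b) = (\<Sum>b\<in>{d,d'}. T b)"
      by (rule sum.mono_neutral_right) (use dd oth in \<open>auto simp: T_def\<close>)
    also have "\<dots> = T d + T d'" using dd by simp
    also have "T d = C d (blam d - bmu d)"
      unfolding T_def using split[OF sub(1) part_fin, of d] A dd by simp
    also have "T d' = - C d' (bmu d' - blam d')"
      unfolding T_def using split[OF sub(2) part_fin, of d'] B dd by simp
    also have "C d (blam d - bmu d) + - C d' (bmu d' - blam d') = 0"
      using key_J1[OF j a ww_per] unfolding C_def by simp
    finally show ?thesis .
  next
    assume "\<exists>d. J2 l blam bmu d"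
    then obtain d where a: "J2 l blam bmu d" by blast
    have dd: "d \<in> {1..l}" and oth: "\<forall>b\<in>{1..l}. b \<noteq> d \<longrightarrow> blam b = bmu b"
      using a unfolding J2_def by auto
    have "(\<Sum>b=1..l. T b) = (\<Sum>b\<in>{d}. T b)"
      by (rule sum.mono_neutral_right) (use dd oth in \<open>auto simp: T_def\<close>)
    also have "\<dots> = T d" by simp
    also have "T d = C d (blam d - (blam d \<inter> bmu d)) - C d (bmu d - (blam d \<inter> bmu d))"
    proof -
      have f1: "finite (blam d)" "finite (bmu d)" using A B dd part_fin by auto
      show ?thesis unfolding T_def
        using split[of "blam d \<inter> bmu d" "blam d" d] split[of "blam d \<inter> bmu d" "bmu d" d] f1 by simp
    qed
    also have "\<dots> = 0"
      using key_J2[OF j a ww_per] unfolding C_def by simp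
    finally show ?thesis .
  qed
  then have "card lam = card mu" using cf by simp
  then show ?thesis using JJ P1 P2 by blast
qed


end
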